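(* Let $\Omega$ be a finite set with $n$ elements and let $G \le \mathrm{Sym}(\Omega)$ be $t$-transitive with $t\ge 3$, such that $G$ does not contain $\mathrm{Alt}(\Omega)$. Let $m$ be the minimal degree of $G$. If $n \ge 23$, then $m \ge n/3$.
   Context: $G$ is $t$-transitive if it acts transitively on ordered $t$-tuples of distinct points of $\Omega$. The minimal degree of $G$ is $m=\min\{|\mathrm{supp}(u)| \mid u\in G,\ u\neq 1\}$, where $\mathrm{supp}(u)=\{\alpha\in\Omega\mid \alpha^u\ne\alpha\}$. *)

theory Defs
  imports Complex_Main "HOL-Combinatorics.Permutations"
begin

definition perm_group :: "'a set \<Rightarrow> ('a \<Rightarrow> 'a) set \<Rightarrow> bool" where
  "perm_group \<Omega> G \<longleftrightarrow>
     (\<forall>g\<in>G. g permutes \<Omega>) \<and> id \<in> G \<and>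
     (\<forall>g\<in>G. \<forall>h\<in>G. g \<circ> h \<in> G) \<and> (\<forall>g\<in>G. inv g \<in> G)"

definition alt_set :: "'a set \<Rightarrow> ('a \<Rightarrow> 'a) set" where
  "alt_set \<Omega> = {p. p permutes \<Omega> \<and> evenperm p}"

definition t_transitive :: "nat \<Rightarrow> 'a set \<Rightarrow> ('a \<Rightarrow> 'a) set \<Rightarrow> bool" where
  "t_transitive t \<Omega> G \<longleftrightarrow>
     (\<forall>xs ys. length xs = t \<and> length ys = t \<and> distinct xs \<and> distinct ys \<and>
        set xs \<subseteq> \<Omega> \<and> set ys \<subseteq> \<Omega> \<longrightarrow> (\<exists>g\<in>G. map g xs = ys))"

definition supp :: "'a set \<Rightarrow> ('a \<Rightarrow> 'a) \<Rightarrow> 'a set" where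
  "supp \<Omega> u = {\<alpha>\<in>\<Omega>. u \<alpha> \<noteq> \<alpha>}"

definition minimal_degree :: "'a set \<Rightarrow> ('a \<Rightarrow> 'a) set \<Rightarrow> nat" where
  "minimal_degree \<Omega> G = Min {card (supp \<Omega> u) | u. u \<in> G \<and> u \<noteq> id}"

end

theory Submission
  imports Defs
begin

lemma pg_permutes: "perm_group \<Omega> G \<Longrightarrow> g \<in> G \<Longrightarrow> g permutes \<Omega>"
  unfolding perm_group_def by blast

lemma pg_comp: "perm_group \<Omega> G \<Longrightarrow> g \<in> G \<Longrightarrow> h \<in> G \<Longrightarrow> g \<circ> h \<in> G"
  unfolding perm_group_def by blast

lemma pg_inv: "perm_group \<Omega> G \<Longrightarrow> g \<in> G \<Longrightarrow> inv g \<in> G"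
  unfolding perm_group_def by blast

lemma pg_finite: "perm_group \<Omega> G \<Longrightarrow> finite \<Omega> \<Longrightarrow> finite G"
  by (rule finite_subset[OF _ finite_permutations[of \<Omega>]]) (auto simp: perm_group_def)

lemma trans3:
  assumes "finite \<Omega>" "t_transitive t \<Omega> G" "3 \<le> t" "t \<le> card \<Omega>"
    and "x1 \<in> \<Omega>" "x2 \<in> \<Omega>" "x3 \<in> \<Omega>" "distinct [x1,x2,x3]"
    and "y1 \<in> \<Omega>" "y2 \<in> \<Omega>" "y3 \<in> \<Omega>" "distinct [y1,y2,y3]"
  shows "\<exists>g\<in>G. g x1 = y1 \<and> g x2 = y2 \<and> g x3 = y3"
proof -
  have ext: "\<exists>zs. length zs = t \<and> distinct zs \<and> set zs \<subseteq> \<Omega> \<and> take 3 zs = [a1,a2,a3]"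
    if "a1 \<in> \<Omega>" "a2 \<in> \<Omega>" "a3 \<in> \<Omega>" "distinct [a1,a2,a3]" for a1 a2 a3
  proof -
    obtain ws where ws: "set ws = \<Omega> - {a1,a2,a3}" "distinct ws"
      using finite_distinct_list[of "\<Omega> - {a1,a2,a3}"] assms(1) by auto
    have "length ws = card \<Omega> - 3"
      using ws that assms(1) distinct_card[OF ws(2)] by (simp add: card_Diff_subset)
    define zs where "zs = [a1,a2,a3] @ take (t - 3) ws"
    have "length zs = t" using \<open>length ws = card \<Omega> - 3\<close> assms(3,4) by (simp add: zs_def)
    moreover have "distinct zs" unfolding zs_def using ws that
      by (auto dest: in_set_takeD)
    moreover have "set zs \<subseteq> \<Omega>" unfolding zs_def using ws that
      by (auto dest: in_set_takeD)
    moreover have "take 3 zs = [a1,a2,a3]" by (simp add: zs_def)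
    ultimately show ?thesis by blast
  qed
  obtain xs where xs: "length xs = t" "distinct xs" "set xs \<subseteq> \<Omega>" "take 3 xs = [x1,x2,x3]"
    using ext[OF assms(5-8)] by blast
  obtain ys where ys: "length ys = t" "distinct ys" "set ys \<subseteq> \<Omega>" "take 3 ys = [y1,y2,y3]"
    using ext[OF assms(9-12)] by blast
  obtain g where g: "g \<in> G" "map g xs = ys"
    using assms(2) xs ys unfolding t_transitive_def by blast
  have "map g (take 3 xs) = take 3 ys" using g(2) by (metis take_map)
  then show ?thesis using g(1) xs(4) ys(4) by auto
qed

lemma perm_fix_iff:
  assumes "u permutes \<Omega>"
  shows "u x = x \<longleftrightarrow> x \<notin> supp \<Omega> u"
  using assms unfolding supp_def by (auto simp: permutes_not_in)

lemma comm_bound: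
  assumes pg: "perm_group \<Omega> G" and fin: "finite \<Omega>"
    and uG: "u \<in> G" and gG: "g \<in> G"
    and S: "S = supp \<Omega> u" and aS: "\<alpha> \<in> S" and ga: "g \<alpha> = \<alpha>"
    and cO: "\<gamma> \<notin> S" and gc: "g \<gamma> = u \<alpha>"
    and minim: "\<And>c. c \<in> G \<Longrightarrow> c \<noteq> id \<Longrightarrow> m \<le> card (supp \<Omega> c)"
  shows "m + (if g (u \<alpha>) \<in> S then 1 else 0) + (if g (inv u \<alpha>) \<in> S then 1 else 0)
          \<le> 3 * card {x\<in>S. g x \<in> S}"
proof -
  have up: "u permutes \<Omega>" and gp: "g permutes \<Omega>" using pg uG gG pg_permutes by blast+
  define v where "v = inv g \<circ> u \<circ> g"
  have vG: "v \<in> G" unfolding v_def using pg uG gG pg_comp pg_inv by blast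
  have vp: "v permutes \<Omega>" using pg vG pg_permutes by blast
  define c where "c = u \<circ> v \<circ> inv u \<circ> inv v"
  have cG: "c \<in> G" unfolding c_def using pg uG vG pg_comp pg_inv by blast
  have SO: "S \<subseteq> \<Omega>" unfolding S supp_def by auto
  have finS: "finite S" using SO fin finite_subset by blast
  have ufix: "u x = x \<longleftrightarrow> x \<notin> S" for x using perm_fix_iff[OF up] S by simp
  have uinvfix: "inv u x = x \<longleftrightarrow> x \<notin> S" for x
    using ufix permutes_inverses[OF up] by metis
  have vfix: "v x = x \<longleftrightarrow> g x \<notin> S" for x
  proof -
    have "v x = x \<longleftrightarrow> u (g x) = g x"
      unfolding v_def using permutes_inverses[OF gp] by (metis comp_apply)
    then show ?thesis using ufix by simp
  qed
  have vinvfix: "inv v x = x \<longleftrightarrow> g x \<notin> S" for x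
    using vfix permutes_inverses[OF vp] by metis
  define D where "D = {x\<in>S. g x \<in> S}"
  have finD: "finite D" unfolding D_def using finS by simp
  have uinv: "u (inv u x) = x" "inv u (u x) = x" for x using permutes_inverses[OF up] by auto
  have vinv: "v (inv v x) = x" "inv v (v x) = x" for x using permutes_inverses[OF vp] by auto
  have suppc: "supp \<Omega> c \<subseteq> D \<union> u ` D \<union> v ` D"
  proof
    fix x assume x: "x \<in> supp \<Omega> c"
    then have cx: "c x \<noteq> x" unfolding supp_def by auto
    show "x \<in> D \<union> u ` D \<union> v ` D"
    proof (rule ccontr)
      assume nx: "x \<notin> D \<union> u ` D \<union> v ` D"
      show False
      proof (cases "x \<in> S")
        case True
        then have "g x \<notin> S" using nx unfolding D_def by auto
        then have i1: "inv v x = x" using vinvfix by simp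
        define y where "y = inv u x"
        have uy: "u y = x" unfolding y_def using uinv by simp
        have "y \<in> S" using True ufix uy by (metis)
        moreover have "y \<notin> D" using nx uy by auto
        ultimately have "g y \<notin> S" unfolding D_def by auto
        then have "v y = y" using vfix by simp
        then have "c x = x" unfolding c_def using i1 uy y_def by simp
        then show False using cx by simp
      next
        case False
        then have ux: "u x = x" using ufix by simp
        show False
        proof (cases "g x \<in> S")
          case False
          then have "inv v x = x" "v x = x" using vinvfix vfix by auto
          moreover have "inv u x = x" using \<open>x \<notin> S\<close> uinvfix by simp
          ultimately have "c x = x" unfolding c_def using ux by simp
          then show False using cx by simp
        next
          case True
          define z where "z = inv v x"
          have vz: "v z = x" unfolding z_def using vinv by simp
          have "z \<noteq> x"
          proof
            assume "z = x"
            then have "v x = x" using vz by simp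
            then show False using True vfix[of x] by simp
          qed
          then have "v z \<noteq> z" using vz by simp
          then have "g z \<in> S" using vfix[of z] by simp
          moreover have "z \<notin> D" using nx vz by auto
          ultimately have "z \<notin> S" unfolding D_def by auto
          then have "inv u z = z" using uinvfix by simp
          then have "c x = x" unfolding c_def using vz ux z_def by simp
          then show False using cx by simp
        qed
      qed
    qed
  qed
  have ua: "u \<alpha> \<noteq> \<alpha>" using ufix aS by simp
  have va: "v \<alpha> = \<gamma>"
  proof -
    have "v \<alpha> = inv g (g \<gamma>)" unfolding v_def using ga gc by simp
    then show ?thesis using permutes_inverses[OF gp] by simp
  qed
  have "c \<noteq> id"
  proof
    assume cid: "c = id"
    define y where "y = v (u \<alpha>)"
    have "c y = u (v \<alpha>)" unfolding c_def y_def using vinv uinv by simp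
    also have "\<dots> = \<gamma>" using va ufix cO by simp
    finally have "y = \<gamma>" using cid by simp
    then have "v (u \<alpha>) = v \<alpha>" using va y_def by simp
    then have "u \<alpha> = \<alpha>" using permutes_inj[OF vp] by (meson injD)
    then show False using ua by simp
  qed
  then have mle: "m \<le> card (supp \<Omega> c)" using minim cG by blast
  have injU: "inj u" using permutes_inj[OF up] .
  have "card (supp \<Omega> c) \<le> card (D \<union> u ` D \<union> v ` D)"
    using suppc finD by (intro card_mono) auto
  also have "\<dots> \<le> card (D \<union> u ` D) + card (v ` D)" by (rule card_Un_le)
  also have "\<dots> \<le> card (D \<union> u ` D) + card D" using card_image_le[OF finD, of v] by simp
  finally have c1: "card (supp \<Omega> c) \<le> card (D \<union> u ` D) + card D" .
  have c2: "card (D \<union> u ` D) + card (D \<inter> u ` D) = card D + card D"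
    using card_Un_Int[of D "u ` D"] finD card_image[OF inj_on_subset[OF injU]] by simp
  have aD: "\<alpha> \<in> D" unfolding D_def using aS ga by simp
  have bS: "u \<alpha> \<in> S" using ufix ua by (metis injD[OF injU])
  have a'S: "inv u \<alpha> \<in> S" using ufix[of "inv u \<alpha>"] uinv ua by metis
  have bD: "u \<alpha> \<in> D \<inter> u ` D" if "g (u \<alpha>) \<in> S" using that bS aD unfolding D_def by auto
  have a'D: "\<alpha> \<in> D \<inter> u ` D" if "g (inv u \<alpha>) \<in> S"
  proof -
    have "inv u \<alpha> \<in> D" using that a'S unfolding D_def by simp
    then have "u (inv u \<alpha>) \<in> u ` D" by blast
    then show ?thesis using uinv aD by simp
  qed
  have c3: "(if g (u \<alpha>) \<in> S then 1 else 0) + (if g (inv u \<alpha>) \<in> S then 1 else 0)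
        \<le> card (D \<inter> u ` D)"
  proof -
    have fi: "finite (D \<inter> u ` D)" using finD by simp
    show ?thesis
    proof (cases "g (u \<alpha>) \<in> S"; cases "g (inv u \<alpha>) \<in> S")
      assume "g (u \<alpha>) \<in> S" "g (inv u \<alpha>) \<in> S"
      then have "{u \<alpha>, \<alpha>} \<subseteq> D \<inter> u ` D" using bD a'D by auto
      from card_mono[OF fi this] show ?thesis using ua \<open>g (u \<alpha>) \<in> S\<close> \<open>g (inv u \<alpha>) \<in> S\<close> by simp
    next
      assume "g (u \<alpha>) \<in> S" "g (inv u \<alpha>) \<notin> S"
      then have "{u \<alpha>} \<subseteq> D \<inter> u ` D" using bD by auto
      from card_mono[OF fi this] show ?thesis using \<open>g (u \<alpha>) \<in> S\<close> \<open>g (inv u \<alpha>) \<notin> S\<close> by simp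
    next
      assume "g (u \<alpha>) \<notin> S" "g (inv u \<alpha>) \<in> S"
      then have "{\<alpha>} \<subseteq> D \<inter> u ` D" using a'D by auto
      from card_mono[OF fi this] show ?thesis using \<open>g (u \<alpha>) \<notin> S\<close> \<open>g (inv u \<alpha>) \<in> S\<close> by simp
    next
      assume "g (u \<alpha>) \<notin> S" "g (inv u \<alpha>) \<notin> S"
      then show ?thesis by simp
    qed
  qed
  show ?thesis using mle c1 c2 c3 unfolding D_def by linarith
qed

definition tr3 :: "'a set \<Rightarrow> ('a \<Rightarrow> 'a) set \<Rightarrow> bool" where
  "tr3 \<Omega> G \<longleftrightarrow> (\<forall>x1 x2 x3 y1 y2 y3. x1 \<in> \<Omega> \<and> x2 \<in> \<Omega> \<and> x3 \<in> \<Omega> \<and> distinct [x1,x2,x3]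
     \<and> y1 \<in> \<Omega> \<and> y2 \<in> \<Omega> \<and> y3 \<in> \<Omega> \<and> distinct [y1,y2,y3]
     \<longrightarrow> (\<exists>g\<in>G. g x1 = y1 \<and> g x2 = y2 \<and> g x3 = y3))"

lemma tr3D:
  assumes "tr3 \<Omega> G" "x1 \<in> \<Omega>" "x2 \<in> \<Omega>" "x3 \<in> \<Omega>" "distinct [x1,x2,x3]"
    "y1 \<in> \<Omega>" "y2 \<in> \<Omega>" "y3 \<in> \<Omega>" "distinct [y1,y2,y3]"
  obtains g where "g \<in> G" "g x1 = y1" "g x2 = y2" "g x3 = y3"
  using assms unfolding tr3_def by blast

lemma fiber_le:
  assumes pg: "perm_group \<Omega> G" and fin: "finite \<Omega>" and tr: "tr3 \<Omega> G"
    and O: "\<alpha> \<in> \<Omega>" "\<beta> \<in> \<Omega>" "\<gamma> \<in> \<Omega>" "\<alpha> \<noteq> \<beta>" "\<alpha> \<noteq> \<gamma>"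
    and x: "x \<in> \<Omega>" "x \<noteq> \<alpha>" "x \<noteq> \<gamma>" and x': "x' \<in> \<Omega>" "x' \<noteq> \<alpha>" "x' \<noteq> \<gamma>"
    and y: "y \<in> \<Omega>" "y \<noteq> \<alpha>" "y \<noteq> \<beta>" and y': "y' \<in> \<Omega>" "y' \<noteq> \<alpha>" "y' \<noteq> \<beta>"
  shows "card {g\<in>G. g \<alpha> = \<alpha> \<and> g \<gamma> = \<beta> \<and> g x = y} \<le> card {g\<in>G. g \<alpha> = \<alpha> \<and> g \<gamma> = \<beta> \<and> g x' = y'}"
proof -
  obtain s where s: "s \<in> G" "s \<alpha> = \<alpha>" "s \<gamma> = \<gamma>" "s x' = x"
    using tr3D[OF tr, of \<alpha> \<gamma> x' \<alpha> \<gamma> x] O x x' by auto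
  obtain r where r: "r \<in> G" "r \<alpha> = \<alpha>" "r \<beta> = \<beta>" "r y = y'"
    using tr3D[OF tr, of \<alpha> \<beta> y \<alpha> \<beta> y'] O y y' by auto
  have sp: "s permutes \<Omega>" and rp: "r permutes \<Omega>" using pg s r pg_permutes by blast+
  define f where "f g = r \<circ> g \<circ> s" for g :: "'a \<Rightarrow> 'a"
  have "inj_on f {g\<in>G. g \<alpha> = \<alpha> \<and> g \<gamma> = \<beta> \<and> g x = y}"
  proof
    fix g1 g2 assume "g1 \<in> {g\<in>G. g \<alpha> = \<alpha> \<and> g \<gamma> = \<beta> \<and> g x = y}"
      "g2 \<in> {g\<in>G. g \<alpha> = \<alpha> \<and> g \<gamma> = \<beta> \<and> g x = y}" and e: "f g1 = f g2"
    show "g1 = g2"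
    proof
      fix w
      have "r (g1 (s (inv s w))) = r (g2 (s (inv s w)))" using e unfolding f_def
        by (metis comp_apply)
      then have "g1 (s (inv s w)) = g2 (s (inv s w))" using permutes_inj[OF rp] by (meson injD)
      then show "g1 w = g2 w" using permutes_inverses[OF sp] by simp
    qed
  qed
  moreover have "f ` {g\<in>G. g \<alpha> = \<alpha> \<and> g \<gamma> = \<beta> \<and> g x = y} \<subseteq> {g\<in>G. g \<alpha> = \<alpha> \<and> g \<gamma> = \<beta> \<and> g x' = y'}"
    using s r pg_comp[OF pg] unfolding f_def by auto
  moreover have "finite {g\<in>G. g \<alpha> = \<alpha> \<and> g \<gamma> = \<beta> \<and> g x' = y'}"
    using pg_finite[OF pg fin] by simp
  ultimately show ?thesis by (rule card_inj_on_le)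
qed

lemma fiber_count:
  assumes pg: "perm_group \<Omega> G" and fin: "finite \<Omega>" and tr: "tr3 \<Omega> G"
    and O: "\<alpha> \<in> \<Omega>" "\<beta> \<in> \<Omega>" "\<gamma> \<in> \<Omega>" "\<alpha> \<noteq> \<beta>" "\<alpha> \<noteq> \<gamma>"
    and x0: "x0 \<in> \<Omega>" "x0 \<noteq> \<alpha>" "x0 \<noteq> \<gamma>" and y0: "y0 \<in> \<Omega>" "y0 \<noteq> \<alpha>" "y0 \<noteq> \<beta>"
    and x: "x \<in> \<Omega>" "x \<noteq> \<alpha>" "x \<noteq> \<gamma>" and Y: "Y \<subseteq> \<Omega> - {\<alpha>, \<beta>}"
  shows "card {g\<in>G. g \<alpha> = \<alpha> \<and> g \<gamma> = \<beta> \<and> g x \<in> Y}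
       = card Y * card {g\<in>G. g \<alpha> = \<alpha> \<and> g \<gamma> = \<beta> \<and> g x0 = y0}"
proof -
  let ?N = "card {g\<in>G. g \<alpha> = \<alpha> \<and> g \<gamma> = \<beta> \<and> g x0 = y0}"
  have finG: "finite G" using pg_finite[OF pg fin] .
  have finY: "finite Y" using Y fin finite_subset by blast
  have eq: "{g\<in>G. g \<alpha> = \<alpha> \<and> g \<gamma> = \<beta> \<and> g x \<in> Y} = (\<Union>y\<in>Y. {g\<in>G. g \<alpha> = \<alpha> \<and> g \<gamma> = \<beta> \<and> g x = y})"
    by auto
  have each: "card {g\<in>G. g \<alpha> = \<alpha> \<and> g \<gamma> = \<beta> \<and> g x = y} = ?N" if "y \<in> Y" for y
  proof -
    have yy: "y \<in> \<Omega>" "y \<noteq> \<alpha>" "y \<noteq> \<beta>" using that Y by auto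
    show ?thesis
      using fiber_le[OF pg fin tr O x x0 yy y0] fiber_le[OF pg fin tr O x0 x y0 yy] by simp
  qed
  have "card {g\<in>G. g \<alpha> = \<alpha> \<and> g \<gamma> = \<beta> \<and> g x \<in> Y} = (\<Sum>y\<in>Y. card {g\<in>G. g \<alpha> = \<alpha> \<and> g \<gamma> = \<beta> \<and> g x = y})"
    unfolding eq using finY finG by (intro card_UN_disjoint) auto
  also have "\<dots> = (\<Sum>y\<in>Y. ?N)" using each by simp
  finally show ?thesis by simp
qed

lemma sum_card_swap:
  assumes "finite A" "finite B"
  shows "(\<Sum>a\<in>A. card {b\<in>B. P a b}) = (\<Sum>b\<in>B. card {a\<in>A. P a b})"
proof -
  have ce: "card {z\<in>Z. Q z} = (\<Sum>z\<in>Z. if Q z then 1 else 0)" if "finite Z" for Z and Q :: "'c \<Rightarrow> bool"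
    using sum.inter_filter[OF that, of "\<lambda>_. 1::nat" Q] by simp
  have "(\<Sum>a\<in>A. card {b\<in>B. P a b}) = (\<Sum>a\<in>A. \<Sum>b\<in>B. if P a b then 1 else 0)"
    by (rule sum.cong[OF refl], rule ce[OF assms(2)])
  also have "\<dots> = (\<Sum>b\<in>B. \<Sum>a\<in>A. if P a b then 1 else 0)" by (rule sum.swap)
  also have "\<dots> = (\<Sum>b\<in>B. card {a\<in>A. P a b})"
    by (rule sum.cong[OF refl], rule ce[OF assms(1), symmetric])
  finally show ?thesis .
qed

lemma conj_eq:
  assumes "g permutes \<Omega>" "\<And>x. w (g x) = g (u x)"
  shows "g \<circ> u \<circ> inv g = w"
proof
  fix y
  have "g (inv g y) = y" using permutes_inverses[OF assms(1)] by simp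
  then show "(g \<circ> u \<circ> inv g) y = w y" using assms(2)[of "inv g y"] by simp
qed

lemma alt_from_3cycles:
  assumes pg: "perm_group \<Omega> G" and fin: "finite \<Omega>"
    and H: "\<And>x y z. x \<in> \<Omega> \<Longrightarrow> y \<in> \<Omega> \<Longrightarrow> z \<in> \<Omega> \<Longrightarrow> distinct [x,y,z]
             \<Longrightarrow> transpose x y \<circ> transpose x z \<in> G"
  shows "alt_set \<Omega> \<subseteq> G"
proof -
  have idG: "id \<in> G" using pg unfolding perm_group_def by blast
  have pairs: "transpose c d \<circ> transpose a b \<in> G"
    if "a \<in> \<Omega>" "b \<in> \<Omega>" "c \<in> \<Omega>" "d \<in> \<Omega>" "a \<noteq> b" "c \<noteq> d" for a b c d
  proof -
    consider "c = a" "d = b" | "c = b" "d = a" | "c = a" "d \<noteq> b" | "c = b" "d \<noteq> a"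
      | "d = a" "c \<noteq> b" | "d = b" "c \<noteq> a" | "c \<noteq> a" "c \<noteq> b" "d \<noteq> a" "d \<noteq> b" by blast
    then show ?thesis
    proof cases
      case 1 then show ?thesis using idG by simp
    next
      case 2 then show ?thesis using idG by (simp add: transpose_commute)
    next
      case 3 then show ?thesis using H[of a d b] that by auto
    next
      case 4 then show ?thesis using H[of b d a] that by (auto simp: transpose_commute)
    next
      case 5 then show ?thesis using H[of a c b] that by (auto simp: transpose_commute)
    next
      case 6 then show ?thesis using H[of b c a] that by (auto simp: transpose_commute)
    next
      case 7
      have e: "transpose c d \<circ> transpose a b
          = (transpose c d \<circ> transpose c a) \<circ> (transpose a c \<circ> transpose a b)"
        by (simp add: fun_eq_iff transpose_commute)
      show ?thesis unfolding e using H[of c d a] H[of a c b] that 7 pg_comp[OF pg] by auto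
    qed
  qed
  have main: "(evenperm p \<longrightarrow> p \<in> G) \<and>
      (\<not> evenperm p \<longrightarrow> (\<forall>a b. a \<in> \<Omega> \<longrightarrow> b \<in> \<Omega> \<longrightarrow> a \<noteq> b \<longrightarrow> transpose a b \<circ> p \<in> G))"
    if "p permutes \<Omega>" for p
    using that fin
  proof (induction rule: permutes_induct)
    case id
    show ?case using idG unfolding id_def by simp
  next
    case (swap a b p)
    have pp: "permutation p" using swap.hyps(4) fin permutation_permutes by blast
    have pt: "permutation (transpose a b)"
      using permutes_swap_id[OF swap.hyps(1,2)] fin permutation_permutes by blast
    have ev: "evenperm (transpose a b \<circ> p) \<longleftrightarrow> \<not> evenperm p"
      using evenperm_comp[OF pt pp] evenperm_swap[of a b] swap.hyps(3) by simp
    show ?case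
    proof (cases "evenperm p")
      case True
      then have pG: "p \<in> G" using swap.IH by simp
      have tc: "transpose c d \<circ> (transpose a b \<circ> p) \<in> G"
        if "c \<in> \<Omega>" "d \<in> \<Omega>" "c \<noteq> d" for c d
      proof -
        have "transpose c d \<circ> (transpose a b \<circ> p) = (transpose c d \<circ> transpose a b) \<circ> p"
          by (simp add: comp_assoc)
        then show ?thesis using pairs[OF swap.hyps(1,2) that(1,2) swap.hyps(3) that(3)] pG pg_comp[OF pg]
          by simp
      qed
      have nev: "\<not> evenperm (transpose a b \<circ> p)" using ev True by simp
      show ?thesis using tc nev by blast
    next
      case False
      have ev2: "evenperm (transpose a b \<circ> p)" using ev False by simp
      have "transpose a b \<circ> p \<in> G" using swap.IH False swap.hyps(1-3) by blast
      then show ?thesis using ev2 by blast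
    qed
  qed
  show ?thesis
  proof
    fix p assume "p \<in> alt_set \<Omega>"
    then have "p permutes \<Omega>" "evenperm p" unfolding alt_set_def by auto
    then show "p \<in> G" using main by blast
  qed
qed

lemma small_support:
  assumes pg: "perm_group \<Omega> G" and fin: "finite \<Omega>" and tr: "tr3 \<Omega> G"
    and n3: "3 \<le> card \<Omega>"
    and uG: "u \<in> G" and uid: "u \<noteq> id" and sm: "card (supp \<Omega> u) \<le> 3"
  shows "alt_set \<Omega> \<subseteq> G"
proof -
  define S where "S = supp \<Omega> u"
  have up: "u permutes \<Omega>" using pg uG pg_permutes by blast
  have SO: "S \<subseteq> \<Omega>" unfolding S_def supp_def by auto
  have finS: "finite S" using SO fin finite_subset by blast
  have ufix: "u x = x \<longleftrightarrow> x \<notin> S" for x using perm_fix_iff[OF up] S_def by simp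
  have injU: "inj u" using permutes_inj[OF up] .
  have uS: "u x \<in> S" if "x \<in> S" for x
  proof -
    have "u x \<noteq> x" using that ufix by simp
    then have "u (u x) \<noteq> u x" using injD[OF injU] by metis
    then show ?thesis using ufix by simp
  qed
  obtain a where aS: "a \<in> S"
  proof -
    have "\<exists>x. u x \<noteq> x" using uid by (metis eq_id_iff)
    then show ?thesis using that ufix by blast
  qed
  define b where "b = u a"
  have bS: "b \<in> S" using uS[OF aS] b_def by simp
  have ab: "a \<noteq> b" using ufix[of a] aS b_def by auto
  have smS: "card S \<le> 3" using sm S_def by simp
  have comp_in: "\<And>g h. g \<in> G \<Longrightarrow> h \<in> G \<Longrightarrow> g \<circ> h \<in> G" using pg_comp[OF pg] by blast
  show ?thesis
  proof (cases "u b = a")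
    case True
    have Sab: "S = {a, b}"
    proof (rule ccontr)
      assume "S \<noteq> {a, b}"
      then obtain c where c: "c \<in> S" "c \<noteq> a" "c \<noteq> b" using aS bS by blast
      have "u c \<in> S" using uS c by blast
      moreover have "u c \<noteq> a" using injD[OF injU] True b_def c by metis
      moreover have "u c \<noteq> b" using injD[OF injU] b_def c by metis
      moreover have "u c \<noteq> c" using ufix[of c] c by blast
      ultimately have "u c \<in> S" "u c \<noteq> a" "u c \<noteq> b" "u c \<noteq> c" by auto
      then have "{a, b, c, u c} \<subseteq> S" using aS bS c by auto
      moreover have "card {a, b, c, u c} = 4" using ab c \<open>u c \<noteq> a\<close> \<open>u c \<noteq> b\<close> \<open>u c \<noteq> c\<close> by auto
      ultimately have "4 \<le> card S" using card_mono[OF finS] by metis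
      then show False using smS by simp
    qed
    have ut: "u = transpose a b"
    proof
      fix x show "u x = transpose a b x"
        using True b_def ufix[of x] Sab by (cases "x = a"; cases "x = b") auto
    qed
    have transG: "transpose x y \<in> G" if xy: "x \<in> \<Omega>" "y \<in> \<Omega>" "x \<noteq> y" for x y
    proof -
      obtain c where c: "c \<in> \<Omega>" "c \<noteq> a" "c \<noteq> b"
      proof -
        have "card {a, b} < card \<Omega>" using ab n3 by simp
        then have "\<not> \<Omega> \<subseteq> {a, b}" using card_mono[of "{a,b}" \<Omega>] by fastforce
        then show ?thesis using that by blast
      qed
      obtain z where z: "z \<in> \<Omega>" "z \<noteq> x" "z \<noteq> y"
      proof -
        have "card {x, y} < card \<Omega>" using xy(3) n3 by simp
        then have "\<not> \<Omega> \<subseteq> {x, y}" using card_mono[of "{x,y}" \<Omega>] by fastforce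
        then show ?thesis using that by blast
      qed
      have aO: "a \<in> \<Omega>" and bO: "b \<in> \<Omega>" using aS bS SO by auto
      have d1: "distinct [a,b,c]" using ab c by auto
      have d2: "distinct [x,y,z]" using xy z by auto
      obtain g where g: "g \<in> G" "g a = x" "g b = y" "g c = z"
        using tr3D[OF tr aO bO c(1) d1 xy(1,2) z(1) d2] by blast
      have gp: "g permutes \<Omega>" using pg g pg_permutes by blast
      have "g \<circ> u \<circ> inv g = transpose x y"
      proof (rule conj_eq[OF gp])
        fix w
        show "transpose x y (g w) = g (u w)"
        proof (cases "w = a \<or> w = b")
          case True then show ?thesis using g ut by auto
        next
          case False
          then have "g w \<noteq> x" "g w \<noteq> y" using g permutes_inj[OF gp] by (metis injD)+
          then show ?thesis using False ut by simp
        qed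
      qed
      then show ?thesis using comp_in[OF comp_in[OF g(1) uG] pg_inv[OF pg g(1)]] by simp
    qed
    show ?thesis
      by (rule alt_from_3cycles[OF pg fin]) (use transG comp_in in auto)
  next
    case False
    define c where "c = u b"
    have cS: "c \<in> S" using uS[OF bS] c_def by simp
    have bc: "b \<noteq> c" using ufix[of b] bS c_def by auto
    have ac: "a \<noteq> c" using False c_def by auto
    have Sabc: "S = {a, b, c}"
    proof (rule ccontr)
      assume "S \<noteq> {a, b, c}"
      then obtain d where d: "d \<in> S" "d \<noteq> a" "d \<noteq> b" "d \<noteq> c" using aS bS cS by blast
      then have "{a, b, c, d} \<subseteq> S" using aS bS cS by auto
      moreover have "card {a, b, c, d} = 4" using ab ac bc d by auto
      ultimately have "4 \<le> card S" using card_mono[OF finS] by metis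
      then show False using smS by simp
    qed
    have uc: "u c = a"
    proof -
      have "u c \<in> S" using uS[OF cS] .
      moreover have "u c \<noteq> b" using injD[OF injU] b_def ac by metis
      moreover have "u c \<noteq> c" using injD[OF injU] c_def bc by metis
      ultimately show ?thesis using Sabc by auto
    qed
    have cyc: "transpose x y \<circ> transpose x z \<in> G"
      if xyz: "x \<in> \<Omega>" "y \<in> \<Omega>" "z \<in> \<Omega>" "distinct [x,y,z]" for x y z
    proof -
      have aO: "a \<in> \<Omega>" and bO: "b \<in> \<Omega>" and cO: "c \<in> \<Omega>" using aS bS cS SO by auto
      have d1: "distinct [a,b,c]" using ab ac bc by auto
      have d2: "distinct [x,z,y]" using xyz by auto
      obtain g where g: "g \<in> G" "g a = x" "g b = z" "g c = y"
        using tr3D[OF tr aO bO cO d1 xyz(1,3,2) d2] by blast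
      have gp: "g permutes \<Omega>" using pg g pg_permutes by blast
      have "g \<circ> u \<circ> inv g = transpose x y \<circ> transpose x z"
      proof (rule conj_eq[OF gp])
        fix w
        show "(transpose x y \<circ> transpose x z) (g w) = g (u w)"
        proof (cases "w = a \<or> w = b \<or> w = c")
          case True then show ?thesis using g xyz b_def c_def uc by auto
        next
          case False
          then have "g w \<noteq> x" "g w \<noteq> y" "g w \<noteq> z" using g permutes_inj[OF gp] by (metis injD)+
          moreover have "u w = w" using False ufix[of w] Sabc by auto
          ultimately show ?thesis by simp
        qed
      qed
      then show ?thesis using comp_in[OF comp_in[OF g(1) uG] pg_inv[OF pg g(1)]] by simp
    qed
    show ?thesis by (rule alt_from_3cycles[OF pg fin cyc])
  qed
qed

lemma card_ind: "finite Z \<Longrightarrow> (\<Sum>z\<in>Z. if Q z then 1 else 0) = card {z\<in>Z. Q z}"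
  using sum.inter_filter[of Z "\<lambda>_. 1::nat" Q] by simp

lemma final_arith:
  fixes m n :: nat
  assumes "4 \<le> m" "3 * m < n" "23 \<le> n"
    and "m * (n - 2) + 2 * (m - 2) \<le> 3 * (n - 2) + 3 * (m - 1) * (m - 2)"
  shows False
proof -
  define a where "a = n - 2"
  define b where "b = m - 2"
  have nb: "n = a + 2" "m = b + 2" using assms(1,3) unfolding a_def b_def by auto
  have h: "(b + 2) * a + 2 * b \<le> 3 * a + 3 * (b + 1) * b"
    using assms(4) unfolding nb by simp
  then have hi: "int ((b + 2) * a + 2 * b) \<le> int (3 * a + 3 * (b + 1) * b)"
    by (simp only: of_nat_le_iff)
  define A where "A = int a"
  define B where "B = int b"
  have hA: "(B + 2) * A + 2 * B \<le> 3 * A + 3 * (B + 1) * B"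
    using hi unfolding A_def B_def by (simp add: algebra_simps)
  have c: "B \<ge> 2" "3 * B + 5 \<le> A" "A \<ge> 21" using assms unfolding nb A_def B_def by auto
  have key: "(B - 1) * A \<le> B * (3 * B + 1)" using hA by (simp add: algebra_simps)
  show False
  proof (cases "B \<le> 5")
    case True
    then have "B = 2 \<or> B = 3 \<or> B = 4 \<or> B = 5" using c by auto
    then show False using key c by auto
  next
    case False
    have "(B - 1) * (3 * B + 5) \<le> (B - 1) * A"
      using c False by (intro mult_left_mono) auto
    then have "(B - 1) * (3 * B + 5) \<le> B * (3 * B + 1)" using key by linarith
    then show False using False by (simp add: algebra_simps)
  qed
qed

lemma three_points:
  assumes "finite A" "3 \<le> card A"
  obtains a b c where "a \<in> A" "b \<in> A" "c \<in> A" "distinct [a,b,c]"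
proof -
  obtain xs where xs: "set xs = A" "distinct xs" using finite_distinct_list[OF assms(1)] by blast
  have l: "length xs = card A" using distinct_card[OF xs(2)] xs(1) by simp
  have "distinct [xs!0, xs!1, xs!2]" using xs(2) l assms(2) by (auto simp: nth_eq_iff_index_eq)
  moreover have "xs!0 \<in> A" "xs!1 \<in> A" "xs!2 \<in> A" using xs(1) l assms(2) by (auto intro!: nth_mem)
  ultimately show ?thesis using that by blast
qed

lemma other_point:
  assumes "finite A" "finite B" "card B < card A"
  shows "\<exists>x\<in>A. x \<notin> B"
proof (rule ccontr)
  assume "\<not> (\<exists>x\<in>A. x \<notin> B)"
  then have "A \<subseteq> B" by blast
  then have "card A \<le> card B" using assms(2) card_mono by blast
  then show False using assms by simp
qed

lemma perm_neq: "g permutes \<Omega> \<Longrightarrow> x \<noteq> y \<Longrightarrow> g x \<noteq> g y"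
  using permutes_inj injD by metis

theorem theorem3p2:
  fixes \<Omega> :: "'a set" and G :: "('a \<Rightarrow> 'a) set" and n t :: nat
  assumes "finite \<Omega>" and "card \<Omega> = n"
    and "perm_group \<Omega> G"
    and "t_transitive t \<Omega> G" and "3 \<le> t" and "t \<le> n"
    and "\<not> alt_set \<Omega> \<subseteq> G"
    and "n \<ge> 23"
  shows "real (minimal_degree \<Omega> G) \<ge> real n / 3"
proof (rule ccontr)
  assume "\<not> real (minimal_degree \<Omega> G) \<ge> real n / 3"
  then have "real (3 * minimal_degree \<Omega> G) < real n" by simp
  then have lt: "3 * minimal_degree \<Omega> G < n" by (simp only: of_nat_less_iff)
  note fin = assms(1) and pg = assms(3)
  have tr: "tr3 \<Omega> G" unfolding tr3_def
    using trans3[OF fin assms(4) assms(5)] assms(2,6) by blast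
  have finG: "finite G" using pg_finite[OF pg fin] .
  have n3: "3 \<le> card \<Omega>" using assms(2,8) by simp
  obtain a b c where abc: "a \<in> \<Omega>" "b \<in> \<Omega>" "c \<in> \<Omega>" "distinct [a,b,c]"
    using three_points[OF fin n3] by blast
  obtain g0 where g0: "g0 \<in> G" "g0 a = b" "g0 b = a" "g0 c = c"
    using tr3D[OF tr abc(1,2,3,4) abc(2,1,3)] abc(4) by auto
  have g0id: "g0 \<noteq> id" using g0 abc(4) by auto
  define Ms where "Ms = {card (supp \<Omega> u) | u. u \<in> G \<and> u \<noteq> id}"
  have finMs: "finite Ms" unfolding Ms_def using finG by simp
  have neMs: "Ms \<noteq> {}" unfolding Ms_def using g0 g0id by auto
  define m where "m = minimal_degree \<Omega> G"
  have mMin: "m = Min Ms" unfolding m_def minimal_degree_def Ms_def by simp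
  have "m \<in> Ms" using Min_in[OF finMs neMs] mMin by simp
  then obtain u where uG: "u \<in> G" and uid: "u \<noteq> id" and mu: "m = card (supp \<Omega> u)"
    unfolding Ms_def by auto
  have minim: "m \<le> card (supp \<Omega> c)" if "c \<in> G" "c \<noteq> id" for c
    using Min_le[OF finMs] that mMin unfolding Ms_def by auto
  have m4: "4 \<le> m"
  proof (rule ccontr)
    assume "\<not> 4 \<le> m"
    then have "alt_set \<Omega> \<subseteq> G" using small_support[OF pg fin tr n3 uG uid] mu by simp
    then show False using assms(7) by simp
  qed
  have lt': "3 * m < n" using lt m_def by simp
  define S where "S = supp \<Omega> u"
  have up: "u permutes \<Omega>" using pg uG pg_permutes by blast
  have SO: "S \<subseteq> \<Omega>" unfolding S_def supp_def by auto
  have finS: "finite S" using SO fin finite_subset by blast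
  have cardS: "card S = m" using mu S_def by simp
  have ufix: "u x = x \<longleftrightarrow> x \<notin> S" for x using perm_fix_iff[OF up] S_def by simp
  have injU: "inj u" using permutes_inj[OF up] .
  have uinv: "u (inv u x) = x" "inv u (u x) = x" for x using permutes_inverses[OF up] by auto
  obtain \<alpha> where aS: "\<alpha> \<in> S"
  proof -
    have "\<exists>x. u x \<noteq> x" using uid by (metis eq_id_iff)
    then show ?thesis using that ufix by blast
  qed
  define \<beta> where "\<beta> = u \<alpha>"
  have ua: "u \<alpha> \<noteq> \<alpha>" using ufix[of \<alpha>] aS by simp
  have bS: "\<beta> \<in> S"
  proof -
    have "u (u \<alpha>) \<noteq> u \<alpha>" using ua injD[OF injU] by metis
    then show ?thesis using ufix[of "u \<alpha>"] \<beta>_def by simp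
  qed
  have ab: "\<alpha> \<noteq> \<beta>" using ua \<beta>_def by simp
  define \<alpha>' where "\<alpha>' = inv u \<alpha>"
  have a'S: "\<alpha>' \<in> S" using ufix[of "inv u \<alpha>"] uinv ua \<alpha>'_def by metis
  have aa': "\<alpha>' \<noteq> \<alpha>" using uinv ua \<alpha>'_def by metis
  have "card S < card \<Omega>" using cardS lt' assms(2) by simp
  then obtain \<gamma> where cO: "\<gamma> \<in> \<Omega>" and cS: "\<gamma> \<notin> S" using other_point[OF fin finS] by blast
  have aO: "\<alpha> \<in> \<Omega>" and bO: "\<beta> \<in> \<Omega>" using aS bS SO by auto
  have ac: "\<alpha> \<noteq> \<gamma>" using aS cS by auto
  have "card {\<alpha>, \<gamma>} < card \<Omega>" using n3 by (simp add: card_insert_if)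
  then obtain x0 where x0: "x0 \<in> \<Omega>" "x0 \<noteq> \<alpha>" "x0 \<noteq> \<gamma>"
    using other_point[OF fin, of "{\<alpha>, \<gamma>}"] by auto
  have "card {\<alpha>, \<beta>} < card \<Omega>" using n3 by (simp add: card_insert_if)
  then obtain y0 where y0: "y0 \<in> \<Omega>" "y0 \<noteq> \<alpha>" "y0 \<noteq> \<beta>"
    using other_point[OF fin, of "{\<alpha>, \<beta>}"] by auto
  note O = aO bO cO ab ac
  define N where "N = card {g\<in>G. g \<alpha> = \<alpha> \<and> g \<gamma> = \<beta> \<and> g x0 = y0}"
  define C where "C = {g\<in>G. g \<alpha> = \<alpha> \<and> g \<gamma> = \<beta>}"
  have finC: "finite C" unfolding C_def using finG by simp
  have Npos: "N > 0"
  proof -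
    obtain g where "g \<in> G" "g \<alpha> = \<alpha>" "g \<gamma> = \<beta>" "g x0 = y0"
      using tr3D[OF tr aO cO x0(1) _ aO bO y0(1)] x0 y0 ab ac by auto
    then have "g \<in> {g\<in>G. g \<alpha> = \<alpha> \<and> g \<gamma> = \<beta> \<and> g x0 = y0}" by simp
    moreover have "finite {g\<in>G. g \<alpha> = \<alpha> \<and> g \<gamma> = \<beta> \<and> g x0 = y0}" using finG by simp
    ultimately show ?thesis unfolding N_def using card_gt_0_iff by blast
  qed
  have FC: "card {g\<in>G. g \<alpha> = \<alpha> \<and> g \<gamma> = \<beta> \<and> g x \<in> Y} = card Y * N"
    if "x \<in> \<Omega>" "x \<noteq> \<alpha>" "x \<noteq> \<gamma>" "Y \<subseteq> \<Omega> - {\<alpha>, \<beta>}" for x Y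
    unfolding N_def by (rule fiber_count[OF pg fin tr O x0 y0 that])
  have gperm: "g permutes \<Omega>" if "g \<in> C" for g using that pg_permutes[OF pg] unfolding C_def by blast
  have cardC: "card C = (n - 2) * N"
  proof -
    have "C = {g\<in>G. g \<alpha> = \<alpha> \<and> g \<gamma> = \<beta> \<and> g x0 \<in> \<Omega> - {\<alpha>, \<beta>}}"
    proof (intro equalityI subsetI)
      fix g assume g: "g \<in> C"
      have gp: "g permutes \<Omega>" using gperm g .
      have "g x0 \<in> \<Omega>" using permutes_in_image[OF gp] x0 by simp
      moreover have "g x0 \<noteq> \<alpha>" using perm_neq[OF gp x0(2)] g unfolding C_def by simp
      moreover have "g x0 \<noteq> \<beta>" using perm_neq[OF gp x0(3)] g unfolding C_def by simp
      ultimately show "g \<in> {g\<in>G. g \<alpha> = \<alpha> \<and> g \<gamma> = \<beta> \<and> g x0 \<in> \<Omega> - {\<alpha>, \<beta>}}"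
        using g unfolding C_def by simp
    qed (auto simp: C_def)
    also have "card \<dots> = card (\<Omega> - {\<alpha>, \<beta>}) * N" by (rule FC[OF x0]) simp
    also have "card (\<Omega> - {\<alpha>, \<beta>}) = n - 2" using aO bO ab assms(2) fin by (simp add: card_Diff_subset)
    finally show ?thesis .
  qed
  have cardS2: "card (S - {\<alpha>, \<beta>}) = m - 2" using aS bS ab cardS finS by (simp add: card_Diff_subset)
  have FS: "card {g\<in>C. g x \<in> S} = (m - 2) * N" if "x \<in> S" "x \<noteq> \<alpha>" for x
  proof -
    have xO: "x \<in> \<Omega>" "x \<noteq> \<alpha>" "x \<noteq> \<gamma>" using that SO cS by auto
    have "{g\<in>C. g x \<in> S} = {g\<in>G. g \<alpha> = \<alpha> \<and> g \<gamma> = \<beta> \<and> g x \<in> S - {\<alpha>, \<beta>}}"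
    proof (intro equalityI subsetI)
      fix g assume g: "g \<in> {g\<in>C. g x \<in> S}"
      then have gC: "g \<in> C" by simp
      have gp: "g permutes \<Omega>" using gperm gC .
      have "g x \<noteq> \<alpha>" using perm_neq[OF gp xO(2)] gC unfolding C_def by simp
      moreover have "g x \<noteq> \<beta>" using perm_neq[OF gp xO(3)] gC unfolding C_def by simp
      ultimately show "g \<in> {g\<in>G. g \<alpha> = \<alpha> \<and> g \<gamma> = \<beta> \<and> g x \<in> S - {\<alpha>, \<beta>}}"
        using g unfolding C_def by simp
    qed (auto simp: C_def)
    also have "card \<dots> = card (S - {\<alpha>, \<beta>}) * N" by (rule FC[OF xO]) (use SO in auto)
    finally show ?thesis using cardS2 by simp
  qed
  have sumk: "(\<Sum>g\<in>C. card {x\<in>S. g x \<in> S}) = card C + (m - 1) * ((m - 2) * N)"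
  proof -
    have "(\<Sum>g\<in>C. card {x\<in>S. g x \<in> S}) = (\<Sum>x\<in>S. card {g\<in>C. g x \<in> S})"
      by (rule sum_card_swap[OF finC finS])
    also have "\<dots> = card {g\<in>C. g \<alpha> \<in> S} + (\<Sum>x\<in>S - {\<alpha>}. card {g\<in>C. g x \<in> S})"
      using sum.remove[OF finS aS] by simp
    also have "card {g\<in>C. g \<alpha> \<in> S} = card C"
    proof -
      have "{g\<in>C. g \<alpha> \<in> S} = C" using aS unfolding C_def by auto
      then show ?thesis by simp
    qed
    also have "(\<Sum>x\<in>S - {\<alpha>}. card {g\<in>C. g x \<in> S}) = (\<Sum>x\<in>S - {\<alpha>}. (m - 2) * N)"
      using FS by (intro sum.cong) auto
    also have "\<dots> = (m - 1) * ((m - 2) * N)" using cardS aS finS by simp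
    finally show ?thesis .
  qed
  have per: "m + (if g \<beta> \<in> S then 1 else 0) + (if g \<alpha>' \<in> S then 1 else 0)
          \<le> 3 * card {x\<in>S. g x \<in> S}" if "g \<in> C" for g
  proof -
    have "g \<in> G" "g \<alpha> = \<alpha>" "g \<gamma> = u \<alpha>" using that unfolding C_def \<beta>_def by auto
    from comm_bound[OF pg fin uG this(1) S_def aS this(2) cS this(3) minim]
    show ?thesis unfolding \<beta>_def \<alpha>'_def by simp
  qed
  have "(\<Sum>g\<in>C. m + (if g \<beta> \<in> S then 1 else 0) + (if g \<alpha>' \<in> S then 1 else 0))
        \<le> (\<Sum>g\<in>C. 3 * card {x\<in>S. g x \<in> S})"
    using per by (rule sum_mono)
  moreover have "(\<Sum>g\<in>C. m + (if g \<beta> \<in> S then 1 else 0) + (if g \<alpha>' \<in> S then 1 else 0))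
      = m * card C + card {g\<in>C. g \<beta> \<in> S} + card {g\<in>C. g \<alpha>' \<in> S}"
    by (simp add: sum.distrib card_ind[OF finC])
  moreover have "(\<Sum>g\<in>C. 3 * card {x\<in>S. g x \<in> S}) = 3 * (\<Sum>g\<in>C. card {x\<in>S. g x \<in> S})"
    by (simp add: sum_distrib_left)
  ultimately have ineq: "m * card C + (m - 2) * N + (m - 2) * N \<le> 3 * (card C + (m - 1) * ((m - 2) * N))"
    using sumk FS[OF bS ab[symmetric]] FS[OF a'S aa'] by simp
  have "(m * (n - 2) + 2 * (m - 2)) * N \<le> (3 * (n - 2) + 3 * (m - 1) * (m - 2)) * N"
  proof -
    define p where "p = n - 2"
    define q where "q = m - 2"
    define r where "r = m - 1"
    have "m * (p * N) + q * N + q * N \<le> 3 * (p * N + r * (q * N))"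
      using ineq unfolding cardC p_def q_def r_def .
    then have "(m * p + 2 * q) * N \<le> (3 * p + 3 * r * q) * N"
      by (simp add: algebra_simps)
    then show ?thesis unfolding p_def q_def r_def .
  qed
  then have "m * (n - 2) + 2 * (m - 2) \<le> 3 * (n - 2) + 3 * (m - 1) * (m - 2)"
    using Npos by simp
  then show False using final_arith m4 lt' assms(8) by blast
qed

end
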